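(* Let $G=\langle\sigma\rangle\times\langle\tau\rangle$ be a finite bicyclic group (direct product of the cyclic groups generated by $\sigma$ and $\tau$) and $M$ a $G$-module, written multiplicatively. For $H\le G$ let $M^H$ denote the $H$-invariants, and let $N_\sigma:M^{\langle\tau\rangle}\to M^G$ be the norm map $x\mapsto\prod_{j=0}^{\operatorname{ord}\sigma-1}\sigma^j(x)$. Then the kernel of the restriction map $$H^1(G,M)\to H^1(\langle\sigma\rangle,M)\times H^1(\langle\tau\rangle,M)\times H^1(\langle\sigma\tau\rangle,M)$$ is isomorphic to $$Q=\bigl(\ker(N_\sigma)\cap M^{\sigma-1}\cap M^{\sigma\tau-1}\bigr)\big/\bigl(M^{\langle\tau\rangle}\bigr)^{\sigma-1},$$ where for $g\in G$ and a subgroup $N\subseteq M$, $N^{g-1}=\{g(x)x^{-1}:x\in N\}$. *)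

theory Defs
  imports "HOL-Algebra.Algebra"
begin

definition G_module :: "'g monoid \<Rightarrow> 'm monoid \<Rightarrow> ('g \<Rightarrow> 'm \<Rightarrow> 'm) \<Rightarrow> bool" where
  "G_module G M act \<longleftrightarrow> group G \<and> comm_group M
     \<and> (\<forall>g\<in>carrier G. act g \<in> hom M M)
     \<and> (\<forall>x\<in>carrier M. act \<one>\<^bsub>G\<^esub> x = x)
     \<and> (\<forall>g\<in>carrier G. \<forall>h\<in>carrier G. \<forall>x\<in>carrier M.
          act (g \<otimes>\<^bsub>G\<^esub> h) x = act g (act h x))"

definition invariants :: "'g set \<Rightarrow> 'm monoid \<Rightarrow> ('g \<Rightarrow> 'm \<Rightarrow> 'm) \<Rightarrow> 'm set" where
  "invariants H M act = {x \<in> carrier M. \<forall>h\<in>H. act h x = x}"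

definition minus_one_image :: "'m monoid \<Rightarrow> ('g \<Rightarrow> 'm \<Rightarrow> 'm) \<Rightarrow> 'g \<Rightarrow> 'm set \<Rightarrow> 'm set" where
  "minus_one_image M act g N = (\<lambda>x. act g x \<otimes>\<^bsub>M\<^esub> inv\<^bsub>M\<^esub> x) ` N"

definition Z1 :: "'g monoid \<Rightarrow> 'm monoid \<Rightarrow> ('g \<Rightarrow> 'm \<Rightarrow> 'm) \<Rightarrow> 'g set \<Rightarrow> ('g \<Rightarrow> 'm) set" where
  "Z1 G M act H = {f. f \<in> H \<rightarrow>\<^sub>E carrier M \<and>
      (\<forall>g\<in>H. \<forall>h\<in>H. f (g \<otimes>\<^bsub>G\<^esub> h) = f g \<otimes>\<^bsub>M\<^esub> act g (f h))}"

definition Z1_group :: "'g monoid \<Rightarrow> 'm monoid \<Rightarrow> ('g \<Rightarrow> 'm \<Rightarrow> 'm) \<Rightarrow> 'g set \<Rightarrow> ('g \<Rightarrow> 'm) monoid" where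
  "Z1_group G M act H = \<lparr>carrier = Z1 G M act H,
      monoid.mult = (\<lambda>f f'. \<lambda>g\<in>H. f g \<otimes>\<^bsub>M\<^esub> f' g),
      monoid.one = (\<lambda>g\<in>H. \<one>\<^bsub>M\<^esub>)\<rparr>"

definition B1 :: "'g monoid \<Rightarrow> 'm monoid \<Rightarrow> ('g \<Rightarrow> 'm \<Rightarrow> 'm) \<Rightarrow> 'g set \<Rightarrow> ('g \<Rightarrow> 'm) set" where
  "B1 G M act H = {(\<lambda>g\<in>H. act g x \<otimes>\<^bsub>M\<^esub> inv\<^bsub>M\<^esub> x) | x. x \<in> carrier M}"

definition H1 :: "'g monoid \<Rightarrow> 'm monoid \<Rightarrow> ('g \<Rightarrow> 'm \<Rightarrow> 'm) \<Rightarrow> 'g set \<Rightarrow> ('g \<Rightarrow> 'm) set monoid" where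
  "H1 G M act H = Z1_group G M act H Mod B1 G M act H"

definition res :: "'g monoid \<Rightarrow> 'm monoid \<Rightarrow> ('g \<Rightarrow> 'm \<Rightarrow> 'm) \<Rightarrow> 'g set \<Rightarrow>
    ('g \<Rightarrow> 'm) set \<Rightarrow> ('g \<Rightarrow> 'm) set" where
  "res G M act H C = set_mult (Z1_group G M act H) ((\<lambda>f. restrict f H) ` C) (B1 G M act H)"

definition norm_map :: "'g monoid \<Rightarrow> 'm monoid \<Rightarrow> ('g \<Rightarrow> 'm \<Rightarrow> 'm) \<Rightarrow> 'g \<Rightarrow> 'm \<Rightarrow> 'm" where
  "norm_map G M act s x = finprod M (\<lambda>j. act (s [^]\<^bsub>G\<^esub> j) x) {..<group.ord G s}"

end

theory Submission
  imports Defs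
begin


primrec Pw :: "'g monoid \<Rightarrow> 'm monoid \<Rightarrow> ('g \<Rightarrow> 'm \<Rightarrow> 'm) \<Rightarrow> 'g \<Rightarrow> 'm \<Rightarrow> nat \<Rightarrow> 'm" where
  "Pw G M act h a 0 = \<one>\<^bsub>M\<^esub>"
| "Pw G M act h a (Suc n) = Pw G M act h a n \<otimes>\<^bsub>M\<^esub> act (h [^]\<^bsub>G\<^esub> n) a"

locale gmod =
  fixes G :: "'g monoid" and M :: "'m monoid" and act :: "'g \<Rightarrow> 'm \<Rightarrow> 'm"
  assumes gm: "G_module G M act"
begin

lemma grpG: "group G" using gm by (simp add: G_module_def)
lemma cM: "comm_group M" using gm by (simp add: G_module_def)

sublocale G: group G by (rule grpG)
sublocale M: comm_group M by (rule cM)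

lemma act_hom: "g \<in> carrier G \<Longrightarrow> act g \<in> hom M M" using gm by (simp add: G_module_def)
lemma act_closed[simp]: "g \<in> carrier G \<Longrightarrow> x \<in> carrier M \<Longrightarrow> act g x \<in> carrier M"
  by (rule hom_in_carrier[OF act_hom])
lemma act_mult[simp]: "g \<in> carrier G \<Longrightarrow> x \<in> carrier M \<Longrightarrow> y \<in> carrier M \<Longrightarrow>
   act g (x \<otimes>\<^bsub>M\<^esub> y) = act g x \<otimes>\<^bsub>M\<^esub> act g y"
  by (rule hom_mult[OF act_hom])
lemma act_ghom: "g \<in> carrier G \<Longrightarrow> group_hom M M (act g)"
  by (rule group_hom.intro[OF M.is_group M.is_group]) (simp add: group_hom_axioms_def act_hom)
lemma act_one[simp]: "g \<in> carrier G \<Longrightarrow> act g \<one>\<^bsub>M\<^esub> = \<one>\<^bsub>M\<^esub>"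
  by (rule group_hom.hom_one[OF act_ghom])
lemma act_inv[simp]: "g \<in> carrier G \<Longrightarrow> x \<in> carrier M \<Longrightarrow> act g (inv\<^bsub>M\<^esub> x) = inv\<^bsub>M\<^esub> (act g x)"
  by (rule group_hom.hom_inv[OF act_ghom])
lemma act_id[simp]: "x \<in> carrier M \<Longrightarrow> act \<one>\<^bsub>G\<^esub> x = x" using gm by (simp add: G_module_def)
lemma act_comp: "g \<in> carrier G \<Longrightarrow> h \<in> carrier G \<Longrightarrow> x \<in> carrier M \<Longrightarrow>
   act (g \<otimes>\<^bsub>G\<^esub> h) x = act g (act h x)" using gm by (simp add: G_module_def)

lemma fix_pow: "t \<in> carrier G \<Longrightarrow> x \<in> carrier M \<Longrightarrow> act t x = x \<Longrightarrow> act (t [^]\<^bsub>G\<^esub> (j::nat)) x = x"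
  by (induction j) (auto simp: act_comp)

lemma Pw_closed[simp]: "h \<in> carrier G \<Longrightarrow> a \<in> carrier M \<Longrightarrow> Pw G M act h a n \<in> carrier M"
  by (induction n) auto

lemma Pw_add: assumes "h \<in> carrier G" "a \<in> carrier M"
  shows "Pw G M act h a (i + k) = Pw G M act h a i \<otimes>\<^bsub>M\<^esub> act (h [^]\<^bsub>G\<^esub> i) (Pw G M act h a k)"
proof (induction k)
  case 0 then show ?case using assms by simp
next
  case (Suc k)
  have "act (h [^]\<^bsub>G\<^esub> (i + k)) a = act (h [^]\<^bsub>G\<^esub> i) (act (h [^]\<^bsub>G\<^esub> k) a)"
    using assms by (simp add: G.nat_pow_mult[symmetric] act_comp)
  then show ?case using Suc assms by (simp add: M.m_assoc)
qed

lemma swap4: assumes "p \<in> carrier M" "q \<in> carrier M" "r \<in> carrier M" "s \<in> carrier M"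
  shows "(p \<otimes>\<^bsub>M\<^esub> q) \<otimes>\<^bsub>M\<^esub> (r \<otimes>\<^bsub>M\<^esub> s) = (p \<otimes>\<^bsub>M\<^esub> r) \<otimes>\<^bsub>M\<^esub> (q \<otimes>\<^bsub>M\<^esub> s)"
  using assms by (simp add: M.m_assoc M.m_lcomm[of q r])

lemma Pw_mult: assumes "h \<in> carrier G" "a \<in> carrier M" "b \<in> carrier M"
  shows "Pw G M act h (a \<otimes>\<^bsub>M\<^esub> b) n = Pw G M act h a n \<otimes>\<^bsub>M\<^esub> Pw G M act h b n"
proof (induction n)
  case 0 then show ?case by simp
next
  case (Suc n)
  have "Pw G M act h (a \<otimes>\<^bsub>M\<^esub> b) (Suc n) = (Pw G M act h a n \<otimes>\<^bsub>M\<^esub> Pw G M act h b n) \<otimes>\<^bsub>M\<^esub> (act (h [^]\<^bsub>G\<^esub> n) a \<otimes>\<^bsub>M\<^esub> act (h [^]\<^bsub>G\<^esub> n) b)"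
    using Suc assms by simp
  also have "\<dots> = (Pw G M act h a n \<otimes>\<^bsub>M\<^esub> act (h [^]\<^bsub>G\<^esub> n) a) \<otimes>\<^bsub>M\<^esub> (Pw G M act h b n \<otimes>\<^bsub>M\<^esub> act (h [^]\<^bsub>G\<^esub> n) b)"
    by (rule swap4) (use assms in auto)
  finally show ?case by simp
qed

lemma cancel1: assumes "A \<in> carrier M" "C \<in> carrier M"
  shows "A \<otimes>\<^bsub>M\<^esub> (inv\<^bsub>M\<^esub> A \<otimes>\<^bsub>M\<^esub> C) = C"
  using assms by (simp add: M.m_assoc[symmetric])

lemma cancel2: assumes "A \<in> carrier M" "B \<in> carrier M" "C \<in> carrier M"
  shows "A \<otimes>\<^bsub>M\<^esub> (B \<otimes>\<^bsub>M\<^esub> (inv\<^bsub>M\<^esub> A \<otimes>\<^bsub>M\<^esub> C)) = B \<otimes>\<^bsub>M\<^esub> C"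
proof -
  have "A \<otimes>\<^bsub>M\<^esub> (B \<otimes>\<^bsub>M\<^esub> (inv\<^bsub>M\<^esub> A \<otimes>\<^bsub>M\<^esub> C)) = B \<otimes>\<^bsub>M\<^esub> (A \<otimes>\<^bsub>M\<^esub> (inv\<^bsub>M\<^esub> A \<otimes>\<^bsub>M\<^esub> C))"
    by (rule M.m_lcomm) (use assms in auto)
  then show ?thesis using assms by (simp add: cancel1)
qed

lemma tele: assumes "A \<in> carrier M" "x \<in> carrier M" "B \<in> carrier M"
  shows "(A \<otimes>\<^bsub>M\<^esub> inv\<^bsub>M\<^esub> x) \<otimes>\<^bsub>M\<^esub> (B \<otimes>\<^bsub>M\<^esub> inv\<^bsub>M\<^esub> A) = B \<otimes>\<^bsub>M\<^esub> inv\<^bsub>M\<^esub> x"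
  using assms by (simp add: M.m_ac cancel2)

lemma Pw_cob: assumes "h \<in> carrier G" "x \<in> carrier M"
  shows "Pw G M act h (act h x \<otimes>\<^bsub>M\<^esub> inv\<^bsub>M\<^esub> x) n = act (h [^]\<^bsub>G\<^esub> n) x \<otimes>\<^bsub>M\<^esub> inv\<^bsub>M\<^esub> x"
proof (induction n)
  case 0 then show ?case using assms by simp
next
  case (Suc n)
  have e: "act (h [^]\<^bsub>G\<^esub> n) (act h x \<otimes>\<^bsub>M\<^esub> inv\<^bsub>M\<^esub> x) = act (h [^]\<^bsub>G\<^esub> Suc n) x \<otimes>\<^bsub>M\<^esub> inv\<^bsub>M\<^esub> act (h [^]\<^bsub>G\<^esub> n) x"
    using assms by (simp add: act_comp)
  show ?case using Suc assms
    by (simp only: Pw.simps e) (rule tele, auto)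
qed

lemma Pw_fix: assumes "h \<in> carrier G" "a \<in> carrier M" "t \<in> carrier G"
  "h \<otimes>\<^bsub>G\<^esub> t = t \<otimes>\<^bsub>G\<^esub> h" "act t a = a"
  shows "act t (Pw G M act h a n) = Pw G M act h a n"
proof (induction n)
  case 0 then show ?case using assms by simp
next
  case (Suc n)
  have "h [^]\<^bsub>G\<^esub> n \<otimes>\<^bsub>G\<^esub> t = t \<otimes>\<^bsub>G\<^esub> h [^]\<^bsub>G\<^esub> n"
    using assms G.group_commutes_pow by simp
  then have "act t (act (h [^]\<^bsub>G\<^esub> n) a) = act (h [^]\<^bsub>G\<^esub> n) (act t a)"
    using assms act_comp[of t "h [^]\<^bsub>G\<^esub> n" a] act_comp[of "h [^]\<^bsub>G\<^esub> n" t a] by simp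
  then have "act t (act (h [^]\<^bsub>G\<^esub> n) a) = act (h [^]\<^bsub>G\<^esub> n) a"
    using assms by simp
  then show ?case using Suc assms by simp
qed

lemma norm_Pw: assumes "h \<in> carrier G" "a \<in> carrier M"
  shows "finprod M (\<lambda>j. act (h [^]\<^bsub>G\<^esub> j) a) {..<n} = Pw G M act h a n"
proof (induction n)
  case 0 then show ?case by simp
next
  case (Suc n)
  have "finprod M (\<lambda>j. act (h [^]\<^bsub>G\<^esub> j) a) {..<Suc n} =
    act (h [^]\<^bsub>G\<^esub> n) a \<otimes>\<^bsub>M\<^esub> finprod M (\<lambda>j. act (h [^]\<^bsub>G\<^esub> j) a) {..<n}"
    unfolding lessThan_Suc using assms by (subst M.finprod_insert) auto
  then show ?case using Suc assms by (simp add: M.m_comm)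
qed

end


context gmod begin

lemma Z1_carrier[simp]: "carrier (Z1_group G M act H) = Z1 G M act H"
  by (simp add: Z1_group_def)
lemma Z1_mult[simp]: "f \<otimes>\<^bsub>Z1_group G M act H\<^esub> f' = (\<lambda>g\<in>H. f g \<otimes>\<^bsub>M\<^esub> f' g)"
  by (simp add: Z1_group_def)
lemma Z1_one[simp]: "\<one>\<^bsub>Z1_group G M act H\<^esub> = (\<lambda>g\<in>H. \<one>\<^bsub>M\<^esub>)"
  by (simp add: Z1_group_def)

lemma Z1_D: assumes "f \<in> Z1 G M act H"
  shows "\<And>g. g \<in> H \<Longrightarrow> f g \<in> carrier M"
    and "\<And>g. g \<notin> H \<Longrightarrow> f g = undefined"
    and "\<And>g h. g \<in> H \<Longrightarrow> h \<in> H \<Longrightarrow> f (g \<otimes>\<^bsub>G\<^esub> h) = f g \<otimes>\<^bsub>M\<^esub> act g (f h)"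
  using assms by (auto simp: Z1_def PiE_def extensional_def)

lemma Z1_I: assumes "\<And>g. g \<in> H \<Longrightarrow> f g \<in> carrier M"
    and "\<And>g. g \<notin> H \<Longrightarrow> f g = undefined"
    and "\<And>g h. g \<in> H \<Longrightarrow> h \<in> H \<Longrightarrow> f (g \<otimes>\<^bsub>G\<^esub> h) = f g \<otimes>\<^bsub>M\<^esub> act g (f h)"
  shows "f \<in> Z1 G M act H"
  using assms by (auto simp: Z1_def PiE_def extensional_def)

lemma Z1_comm_group: assumes H: "subgroup H G"
  shows "comm_group (Z1_group G M act H)"
proof -
  have HG: "\<And>g. g \<in> H \<Longrightarrow> g \<in> carrier G" by (rule subgroup.mem_carrier[OF H])
  have Hm: "\<And>g h. g \<in> H \<Longrightarrow> h \<in> H \<Longrightarrow> g \<otimes>\<^bsub>G\<^esub> h \<in> H" by (rule subgroup.m_closed[OF H])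
  note D = Z1_D
  show ?thesis
  proof (rule comm_groupI)
    fix f f' assume f: "f \<in> carrier (Z1_group G M act H)" and f': "f' \<in> carrier (Z1_group G M act H)"
    then have f: "f \<in> Z1 G M act H" and f': "f' \<in> Z1 G M act H" by auto
    show "f \<otimes>\<^bsub>Z1_group G M act H\<^esub> f' \<in> carrier (Z1_group G M act H)"
    proof (simp, rule Z1_I)
      fix g h assume g: "g \<in> H" and h: "h \<in> H"
      have "(f g \<otimes>\<^bsub>M\<^esub> act g (f h)) \<otimes>\<^bsub>M\<^esub> (f' g \<otimes>\<^bsub>M\<^esub> act g (f' h))
          = (f g \<otimes>\<^bsub>M\<^esub> f' g) \<otimes>\<^bsub>M\<^esub> (act g (f h) \<otimes>\<^bsub>M\<^esub> act g (f' h))"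
        by (rule swap4) (use g h f f' D HG in auto)
      then show "(\<lambda>g\<in>H. f g \<otimes>\<^bsub>M\<^esub> f' g) (g \<otimes>\<^bsub>G\<^esub> h) =
          (\<lambda>g\<in>H. f g \<otimes>\<^bsub>M\<^esub> f' g) g \<otimes>\<^bsub>M\<^esub> act g ((\<lambda>g\<in>H. f g \<otimes>\<^bsub>M\<^esub> f' g) h)"
        using g h f f' D[OF f] D[OF f'] HG Hm by simp
    qed (use f f' D in auto)
    show "f \<otimes>\<^bsub>Z1_group G M act H\<^esub> f' = f' \<otimes>\<^bsub>Z1_group G M act H\<^esub> f"
      using f f' D[OF f] D[OF f'] by (auto simp: M.m_comm)
  next
    show "\<one>\<^bsub>Z1_group G M act H\<^esub> \<in> carrier (Z1_group G M act H)"
      by (simp, rule Z1_I) (auto simp: HG Hm)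
  next
    fix x y z assume "x \<in> carrier (Z1_group G M act H)" "y \<in> carrier (Z1_group G M act H)"
      "z \<in> carrier (Z1_group G M act H)"
    then have x: "x \<in> Z1 G M act H" and y: "y \<in> Z1 G M act H" and z: "z \<in> Z1 G M act H" by auto
    show "x \<otimes>\<^bsub>Z1_group G M act H\<^esub> y \<otimes>\<^bsub>Z1_group G M act H\<^esub> z =
          x \<otimes>\<^bsub>Z1_group G M act H\<^esub> (y \<otimes>\<^bsub>Z1_group G M act H\<^esub> z)"
      using D[OF x] D[OF y] D[OF z] by (auto simp: M.m_assoc)
  next
    fix x assume "x \<in> carrier (Z1_group G M act H)"
    then have x: "x \<in> Z1 G M act H" by simp
    show "\<one>\<^bsub>Z1_group G M act H\<^esub> \<otimes>\<^bsub>Z1_group G M act H\<^esub> x = x"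
      using D[OF x] by (auto simp: fun_eq_iff)
    show "\<exists>y\<in>carrier (Z1_group G M act H). y \<otimes>\<^bsub>Z1_group G M act H\<^esub> x = \<one>\<^bsub>Z1_group G M act H\<^esub>"
    proof (intro bexI)
      show "(\<lambda>g\<in>H. inv\<^bsub>M\<^esub> x g) \<otimes>\<^bsub>Z1_group G M act H\<^esub> x = \<one>\<^bsub>Z1_group G M act H\<^esub>"
        using D[OF x] by (auto simp: fun_eq_iff)
      show "(\<lambda>g\<in>H. inv\<^bsub>M\<^esub> x g) \<in> carrier (Z1_group G M act H)"
      proof (simp, rule Z1_I)
        fix g h assume g: "g \<in> H" and h: "h \<in> H"
        show "(\<lambda>g\<in>H. inv\<^bsub>M\<^esub> x g) (g \<otimes>\<^bsub>G\<^esub> h) =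
          (\<lambda>g\<in>H. inv\<^bsub>M\<^esub> x g) g \<otimes>\<^bsub>M\<^esub> act g ((\<lambda>g\<in>H. inv\<^bsub>M\<^esub> x g) h)"
          using g h D[OF x] HG Hm by (simp add: M.inv_mult)
      qed (use D[OF x] in auto)
    qed
  qed
qed

definition cob :: "'g set \<Rightarrow> 'm \<Rightarrow> 'g \<Rightarrow> 'm" where
  "cob H x = (\<lambda>g\<in>H. act g x \<otimes>\<^bsub>M\<^esub> inv\<^bsub>M\<^esub> x)"

lemma B1_eq: "B1 G M act H = cob H ` carrier M"
  by (auto simp: B1_def cob_def)

lemma cob_Z1: assumes H: "subgroup H G" and x: "x \<in> carrier M"
  shows "cob H x \<in> Z1 G M act H"
proof -
  have HG: "\<And>g. g \<in> H \<Longrightarrow> g \<in> carrier G" by (rule subgroup.mem_carrier[OF H])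
  have Hm: "\<And>g h. g \<in> H \<Longrightarrow> h \<in> H \<Longrightarrow> g \<otimes>\<^bsub>G\<^esub> h \<in> H" by (rule subgroup.m_closed[OF H])
  show ?thesis unfolding cob_def
  proof (rule Z1_I)
    fix g h assume g: "g \<in> H" and h: "h \<in> H"
    have "act g x \<otimes>\<^bsub>M\<^esub> inv\<^bsub>M\<^esub> x \<otimes>\<^bsub>M\<^esub> (act (g \<otimes>\<^bsub>G\<^esub> h) x \<otimes>\<^bsub>M\<^esub> inv\<^bsub>M\<^esub> act g x)
       = act (g \<otimes>\<^bsub>G\<^esub> h) x \<otimes>\<^bsub>M\<^esub> inv\<^bsub>M\<^esub> x"
      by (rule tele) (use g h x HG in auto)
    then show "(\<lambda>g\<in>H. act g x \<otimes>\<^bsub>M\<^esub> inv\<^bsub>M\<^esub> x) (g \<otimes>\<^bsub>G\<^esub> h) =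
      (\<lambda>g\<in>H. act g x \<otimes>\<^bsub>M\<^esub> inv\<^bsub>M\<^esub> x) g \<otimes>\<^bsub>M\<^esub> act g ((\<lambda>g\<in>H. act g x \<otimes>\<^bsub>M\<^esub> inv\<^bsub>M\<^esub> x) h)"
      using g h x HG Hm by (simp add: act_comp)
  qed (use x HG in auto)
qed

lemma cob_mult: assumes H: "subgroup H G" and x: "x \<in> carrier M" and y: "y \<in> carrier M"
  shows "cob H x \<otimes>\<^bsub>Z1_group G M act H\<^esub> cob H y = cob H (x \<otimes>\<^bsub>M\<^esub> y)"
proof -
  have HG: "\<And>g. g \<in> H \<Longrightarrow> g \<in> carrier G" by (rule subgroup.mem_carrier[OF H])
  show ?thesis unfolding cob_def Z1_mult
  proof (rule restrict_ext)
    fix g assume g: "g \<in> H"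
    have "(act g x \<otimes>\<^bsub>M\<^esub> inv\<^bsub>M\<^esub> x) \<otimes>\<^bsub>M\<^esub> (act g y \<otimes>\<^bsub>M\<^esub> inv\<^bsub>M\<^esub> y) =
        (act g x \<otimes>\<^bsub>M\<^esub> act g y) \<otimes>\<^bsub>M\<^esub> (inv\<^bsub>M\<^esub> x \<otimes>\<^bsub>M\<^esub> inv\<^bsub>M\<^esub> y)"
      by (rule swap4) (use g x y HG in auto)
    then show "(\<lambda>g\<in>H. act g x \<otimes>\<^bsub>M\<^esub> inv\<^bsub>M\<^esub> x) g \<otimes>\<^bsub>M\<^esub> (\<lambda>g\<in>H. act g y \<otimes>\<^bsub>M\<^esub> inv\<^bsub>M\<^esub> y) g =
         act g (x \<otimes>\<^bsub>M\<^esub> y) \<otimes>\<^bsub>M\<^esub> inv\<^bsub>M\<^esub> (x \<otimes>\<^bsub>M\<^esub> y)"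
      using g x y HG by (simp add: M.inv_mult)
  qed
qed

lemma B1_subgroup: assumes H: "subgroup H G"
  shows "subgroup (B1 G M act H) (Z1_group G M act H)"
proof -
  interpret Z: comm_group "Z1_group G M act H" by (rule Z1_comm_group[OF H])
  have HG: "\<And>g. g \<in> H \<Longrightarrow> g \<in> carrier G" by (rule subgroup.mem_carrier[OF H])
  show ?thesis unfolding B1_eq
  proof (rule Z.subgroupI)
    show "cob H ` carrier M \<subseteq> carrier (Z1_group G M act H)" using cob_Z1[OF H] by auto
    show "cob H ` carrier M \<noteq> {}" by auto
  next
    fix a assume "a \<in> cob H ` carrier M"
    then obtain x where x: "x \<in> carrier M" and a: "a = cob H x" by auto
    have "inv\<^bsub>Z1_group G M act H\<^esub> a = cob H (inv\<^bsub>M\<^esub> x)"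
    proof (rule Z.inv_equality)
      show "cob H (inv\<^bsub>M\<^esub> x) \<otimes>\<^bsub>Z1_group G M act H\<^esub> a = \<one>\<^bsub>Z1_group G M act H\<^esub>"
      proof -
        have "cob H (inv\<^bsub>M\<^esub> x) \<otimes>\<^bsub>Z1_group G M act H\<^esub> a = cob H \<one>\<^bsub>M\<^esub>"
          unfolding a using cob_mult[OF H, of "inv\<^bsub>M\<^esub> x" x] x by simp
        also have "cob H \<one>\<^bsub>M\<^esub> = \<one>\<^bsub>Z1_group G M act H\<^esub>"
          by (auto simp: cob_def HG intro!: restrict_ext)
        finally show ?thesis .
      qed
    qed (use a x cob_Z1[OF H] in auto)
    then show "inv\<^bsub>Z1_group G M act H\<^esub> a \<in> cob H ` carrier M" using x by auto
  next
    fix a b assume "a \<in> cob H ` carrier M" "b \<in> cob H ` carrier M"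
    then show "a \<otimes>\<^bsub>Z1_group G M act H\<^esub> b \<in> cob H ` carrier M"
      using cob_mult[OF H] by auto
  qed
qed

lemma H1_group: assumes H: "subgroup H G"
  shows "group (H1 G M act H)"
proof -
  interpret Z: comm_group "Z1_group G M act H" by (rule Z1_comm_group[OF H])
  have "B1 G M act H \<lhd> Z1_group G M act H"
    using Z.normal_iff_subgroup B1_subgroup[OF H] by blast
  then show ?thesis unfolding H1_def by (rule normal.factorgroup_is_group)
qed

end


lemma (in group) pow_eq_iff_mod:
  assumes "x \<in> carrier G"
  shows "(x [^] (i::nat) = x [^] (j::nat)) \<longleftrightarrow> i mod ord x = j mod ord x"
proof -
  have "(x [^] i = x [^] j) \<longleftrightarrow> (x [^] int i = x [^] int j)" by (simp add: int_pow_int)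
  also have "\<dots> \<longleftrightarrow> int (ord x) dvd (int j - int i)" using int_pow_eq[OF assms] by simp
  also have "\<dots> \<longleftrightarrow> int j mod int (ord x) = int i mod int (ord x)" by (simp add: mod_eq_dvd_iff)
  also have "\<dots> \<longleftrightarrow> j mod ord x = i mod ord x" by (metis of_nat_eq_iff of_nat_mod)
  finally show ?thesis by auto
qed

locale bicyc = gmod G M act for G :: "'g monoid" and M :: "'m monoid" and act +
  fixes \<sigma> \<tau> :: 'g
  assumes fin: "finite (carrier G)"
    and sG: "\<sigma> \<in> carrier G" and tG: "\<tau> \<in> carrier G"
    and comm: "\<sigma> \<otimes>\<^bsub>G\<^esub> \<tau> = \<tau> \<otimes>\<^bsub>G\<^esub> \<sigma>"
    and prod: "set_mult G (generate G {\<sigma>}) (generate G {\<tau>}) = carrier G"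
    and int: "generate G {\<sigma>} \<inter> generate G {\<tau>} = {\<one>\<^bsub>G\<^esub>}"
begin

abbreviation "m \<equiv> G.ord \<sigma>"

lemma stG: "\<sigma> \<otimes>\<^bsub>G\<^esub> \<tau> \<in> carrier G" using sG tG by simp

lemma gen_pow: "h \<in> carrier G \<Longrightarrow> generate G {h} = {h [^]\<^bsub>G\<^esub> k | k. k \<in> (UNIV :: nat set)}"
  using G.generate_pow_on_finite_carrier[OF fin] by blast

lemma gen_sub: "h \<in> carrier G \<Longrightarrow> subgroup (generate G {h}) G"
  by (rule G.generate_is_subgroup) simp

lemma gen_mem: "h \<in> carrier G \<Longrightarrow> g \<in> generate G {h} \<Longrightarrow> \<exists>k::nat. g = h [^]\<^bsub>G\<^esub> k"
  using gen_pow by blast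

lemma gen_pow_mem: "h \<in> carrier G \<Longrightarrow> h [^]\<^bsub>G\<^esub> (k::nat) \<in> generate G {h}"
  using gen_pow by blast

lemma m_pos: "0 < m" using G.ord_ge_1[OF fin sG] by simp

lemma pow_mod: "\<sigma> [^]\<^bsub>G\<^esub> (i::nat) = \<sigma> [^]\<^bsub>G\<^esub> (i mod m)"
  using G.pow_eq_iff_mod[OF sG] by simp

lemma pow_m: "\<sigma> [^]\<^bsub>G\<^esub> m = \<one>\<^bsub>G\<^esub>" using sG by simp

lemma decomp: "g \<in> carrier G \<Longrightarrow> \<exists>(i::nat) (j::nat). g = \<sigma> [^]\<^bsub>G\<^esub> i \<otimes>\<^bsub>G\<^esub> \<tau> [^]\<^bsub>G\<^esub> j"
proof -
  assume "g \<in> carrier G"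
  then have "g \<in> set_mult G (generate G {\<sigma>}) (generate G {\<tau>})" using prod by simp
  then obtain a b where a: "a \<in> generate G {\<sigma>}" and b: "b \<in> generate G {\<tau>}" and g: "g = a \<otimes>\<^bsub>G\<^esub> b"
    unfolding set_mult_def by blast
  obtain i where "a = \<sigma> [^]\<^bsub>G\<^esub> (i::nat)" using gen_mem[OF sG a] by blast
  moreover obtain j where "b = \<tau> [^]\<^bsub>G\<^esub> (j::nat)" using gen_mem[OF tG b] by blast
  ultimately show ?thesis using g by blast
qed

lemma uniq: assumes "\<sigma> [^]\<^bsub>G\<^esub> (i::nat) \<otimes>\<^bsub>G\<^esub> \<tau> [^]\<^bsub>G\<^esub> (j::nat) = \<sigma> [^]\<^bsub>G\<^esub> (i'::nat) \<otimes>\<^bsub>G\<^esub> \<tau> [^]\<^bsub>G\<^esub> (j'::nat)"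
  shows "i mod m = i' mod m"
proof -
  let ?a = "\<sigma> [^]\<^bsub>G\<^esub> i" and ?b = "\<tau> [^]\<^bsub>G\<^esub> j" and ?c = "\<sigma> [^]\<^bsub>G\<^esub> i'" and ?d = "\<tau> [^]\<^bsub>G\<^esub> j'"
  have car: "?a \<in> carrier G" "?b \<in> carrier G" "?c \<in> carrier G" "?d \<in> carrier G" using sG tG by auto
  have e: "inv\<^bsub>G\<^esub> ?c \<otimes>\<^bsub>G\<^esub> ?a = ?d \<otimes>\<^bsub>G\<^esub> inv\<^bsub>G\<^esub> ?b"
  proof -
    have "inv\<^bsub>G\<^esub> ?c \<otimes>\<^bsub>G\<^esub> ?a = inv\<^bsub>G\<^esub> ?c \<otimes>\<^bsub>G\<^esub> (?a \<otimes>\<^bsub>G\<^esub> ?b) \<otimes>\<^bsub>G\<^esub> inv\<^bsub>G\<^esub> ?b"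
      using car by (simp add: G.m_assoc)
    also have "\<dots> = inv\<^bsub>G\<^esub> ?c \<otimes>\<^bsub>G\<^esub> (?c \<otimes>\<^bsub>G\<^esub> ?d) \<otimes>\<^bsub>G\<^esub> inv\<^bsub>G\<^esub> ?b" using assms by simp
    also have "\<dots> = ?d \<otimes>\<^bsub>G\<^esub> inv\<^bsub>G\<^esub> ?b" using car by (simp add: G.m_assoc[symmetric])
    finally show ?thesis .
  qed
  have "inv\<^bsub>G\<^esub> ?c \<otimes>\<^bsub>G\<^esub> ?a \<in> generate G {\<sigma>}"
    using gen_sub[OF sG] gen_pow_mem[OF sG] by (simp add: subgroup.m_closed subgroup.m_inv_closed)
  moreover have "?d \<otimes>\<^bsub>G\<^esub> inv\<^bsub>G\<^esub> ?b \<in> generate G {\<tau>}"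
    using gen_sub[OF tG] gen_pow_mem[OF tG] by (simp add: subgroup.m_closed subgroup.m_inv_closed)
  ultimately have "inv\<^bsub>G\<^esub> ?c \<otimes>\<^bsub>G\<^esub> ?a = \<one>\<^bsub>G\<^esub>" using e int by auto
  then have "?a = ?c" using car by (metis G.inv_equality G.inv_inv G.inv_closed)
  then show ?thesis using G.pow_eq_iff_mod[OF sG] by simp
qed

definition e :: "'g \<Rightarrow> nat" where
  "e g = (SOME i::nat. \<exists>j. g = \<sigma> [^]\<^bsub>G\<^esub> i \<otimes>\<^bsub>G\<^esub> \<tau> [^]\<^bsub>G\<^esub> (j::nat)) mod m"

lemma e_eq: assumes "g = \<sigma> [^]\<^bsub>G\<^esub> (i::nat) \<otimes>\<^bsub>G\<^esub> \<tau> [^]\<^bsub>G\<^esub> (j::nat)"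
  shows "e g = i mod m"
proof -
  have "\<exists>(i::nat) (j::nat). g = \<sigma> [^]\<^bsub>G\<^esub> i \<otimes>\<^bsub>G\<^esub> \<tau> [^]\<^bsub>G\<^esub> (j::nat)" using assms by blast
  then have "\<exists>j. g = \<sigma> [^]\<^bsub>G\<^esub> (SOME i::nat. \<exists>j. g = \<sigma> [^]\<^bsub>G\<^esub> i \<otimes>\<^bsub>G\<^esub> \<tau> [^]\<^bsub>G\<^esub> (j::nat)) \<otimes>\<^bsub>G\<^esub> \<tau> [^]\<^bsub>G\<^esub> (j::nat)"
    by (rule someI_ex)
  then obtain j' where "g = \<sigma> [^]\<^bsub>G\<^esub> (SOME i::nat. \<exists>j. g = \<sigma> [^]\<^bsub>G\<^esub> i \<otimes>\<^bsub>G\<^esub> \<tau> [^]\<^bsub>G\<^esub> (j::nat)) \<otimes>\<^bsub>G\<^esub> \<tau> [^]\<^bsub>G\<^esub> (j'::nat)"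
    by blast
  then show ?thesis unfolding e_def using uniq assms by metis
qed

lemma decomp_e: assumes "g \<in> carrier G" shows "\<exists>j::nat. g = \<sigma> [^]\<^bsub>G\<^esub> (e g) \<otimes>\<^bsub>G\<^esub> \<tau> [^]\<^bsub>G\<^esub> j"
proof -
  obtain i j where g: "g = \<sigma> [^]\<^bsub>G\<^esub> (i::nat) \<otimes>\<^bsub>G\<^esub> \<tau> [^]\<^bsub>G\<^esub> (j::nat)" using decomp[OF assms] by blast
  then have "e g = i mod m" by (rule e_eq)
  then show ?thesis using g pow_mod by metis
qed

lemma tau_sig_pow: "\<tau> [^]\<^bsub>G\<^esub> (j::nat) \<otimes>\<^bsub>G\<^esub> \<sigma> [^]\<^bsub>G\<^esub> (k::nat) = \<sigma> [^]\<^bsub>G\<^esub> k \<otimes>\<^bsub>G\<^esub> \<tau> [^]\<^bsub>G\<^esub> j"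
proof -
  have "\<sigma> [^]\<^bsub>G\<^esub> k \<otimes>\<^bsub>G\<^esub> \<tau> = \<tau> \<otimes>\<^bsub>G\<^esub> \<sigma> [^]\<^bsub>G\<^esub> k"
    using G.group_commutes_pow[OF comm sG tG] .
  then have "\<tau> [^]\<^bsub>G\<^esub> j \<otimes>\<^bsub>G\<^esub> \<sigma> [^]\<^bsub>G\<^esub> k = \<sigma> [^]\<^bsub>G\<^esub> k \<otimes>\<^bsub>G\<^esub> \<tau> [^]\<^bsub>G\<^esub> j"
    using G.group_commutes_pow[of \<tau> "\<sigma> [^]\<^bsub>G\<^esub> k" j] sG tG by simp
  then show ?thesis .
qed

lemma e_mult: assumes g: "g \<in> carrier G" and h: "h \<in> carrier G"
  shows "e (g \<otimes>\<^bsub>G\<^esub> h) = (e g + e h) mod m"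
proof -
  obtain i j where gi: "g = \<sigma> [^]\<^bsub>G\<^esub> (i::nat) \<otimes>\<^bsub>G\<^esub> \<tau> [^]\<^bsub>G\<^esub> (j::nat)" using decomp[OF g] by blast
  obtain k l where hk: "h = \<sigma> [^]\<^bsub>G\<^esub> (k::nat) \<otimes>\<^bsub>G\<^esub> \<tau> [^]\<^bsub>G\<^esub> (l::nat)" using decomp[OF h] by blast
  have "g \<otimes>\<^bsub>G\<^esub> h = \<sigma> [^]\<^bsub>G\<^esub> i \<otimes>\<^bsub>G\<^esub> (\<tau> [^]\<^bsub>G\<^esub> j \<otimes>\<^bsub>G\<^esub> \<sigma> [^]\<^bsub>G\<^esub> k) \<otimes>\<^bsub>G\<^esub> \<tau> [^]\<^bsub>G\<^esub> l"
    using gi hk sG tG by (simp add: G.m_assoc)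
  also have "\<dots> = \<sigma> [^]\<^bsub>G\<^esub> (i + k) \<otimes>\<^bsub>G\<^esub> \<tau> [^]\<^bsub>G\<^esub> (j + l)"
    using sG tG by (simp add: tau_sig_pow G.m_assoc G.nat_pow_mult[symmetric])
  finally have "e (g \<otimes>\<^bsub>G\<^esub> h) = (i + k) mod m" by (rule e_eq)
  moreover have "e g = i mod m" "e h = k mod m" using gi hk e_eq by auto
  ultimately show ?thesis by (simp add: mod_add_eq)
qed

lemma e_sig: "e (\<sigma> [^]\<^bsub>G\<^esub> (k::nat)) = k mod m"
  by (rule e_eq[where j=0]) (use sG in simp)

lemma e_tau: "e (\<tau> [^]\<^bsub>G\<^esub> (k::nat)) = 0"
  using e_eq[where i=0 and j=k] tG by simp

lemma e_st: "e ((\<sigma> \<otimes>\<^bsub>G\<^esub> \<tau>) [^]\<^bsub>G\<^esub> (k::nat)) = k mod m"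
  by (rule e_eq[where j=k]) (use sG tG comm G.pow_mult_distrib in simp)

lemma inv_tau_I: "y \<in> carrier M \<Longrightarrow> act \<tau> y = y \<Longrightarrow> y \<in> invariants (generate G {\<tau>}) M act"
  unfolding invariants_def using gen_mem[OF tG] fix_pow[OF tG] by blast

lemma inv_tau_D: "y \<in> invariants (generate G {\<tau>}) M act \<Longrightarrow> y \<in> carrier M \<and> act \<tau> y = y"
  unfolding invariants_def using generate.incl[of \<tau> "{\<tau>}" G] by blast

lemma act_e: assumes "y \<in> carrier M" "act \<tau> y = y" "g \<in> carrier G"
  shows "act g y = act (\<sigma> [^]\<^bsub>G\<^esub> (e g)) y"
proof -
  obtain j where g: "g = \<sigma> [^]\<^bsub>G\<^esub> (e g) \<otimes>\<^bsub>G\<^esub> \<tau> [^]\<^bsub>G\<^esub> (j::nat)" using decomp_e[OF assms(3)] by blast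
  have "act g y = act (\<sigma> [^]\<^bsub>G\<^esub> (e g)) (act (\<tau> [^]\<^bsub>G\<^esub> j) y)"
    by (subst g) (use act_comp sG tG assms in simp)
  then show ?thesis using fix_pow[OF tG assms(1,2)] by simp
qed

end


context gmod begin

lemma H1_carrier: "carrier (H1 G M act H) = RCOSETS (Z1_group G M act H) (B1 G M act H)"
  by (simp add: H1_def FactGroup_def)
lemma H1_mult: "monoid.mult (H1 G M act H) A B = set_mult (Z1_group G M act H) A B"
  by (simp add: H1_def FactGroup_def)
lemma H1_one: "\<one>\<^bsub>H1 G M act H\<^esub> = B1 G M act H"
  by (simp add: H1_def FactGroup_def)

lemma div_one: "a \<in> carrier M \<Longrightarrow> b \<in> carrier M \<Longrightarrow> a \<otimes>\<^bsub>M\<^esub> inv\<^bsub>M\<^esub> b = \<one>\<^bsub>M\<^esub> \<Longrightarrow> a = b"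
  by (metis M.inv_equality M.inv_inv M.inv_closed)

lemma img_mult: assumes "h \<in> carrier G" "x \<in> carrier M" "y \<in> carrier M"
  shows "(act h x \<otimes>\<^bsub>M\<^esub> inv\<^bsub>M\<^esub> x) \<otimes>\<^bsub>M\<^esub> (act h y \<otimes>\<^bsub>M\<^esub> inv\<^bsub>M\<^esub> y) = act h (x \<otimes>\<^bsub>M\<^esub> y) \<otimes>\<^bsub>M\<^esub> inv\<^bsub>M\<^esub> (x \<otimes>\<^bsub>M\<^esub> y)"
proof -
  have "(act h x \<otimes>\<^bsub>M\<^esub> inv\<^bsub>M\<^esub> x) \<otimes>\<^bsub>M\<^esub> (act h y \<otimes>\<^bsub>M\<^esub> inv\<^bsub>M\<^esub> y) =
        (act h x \<otimes>\<^bsub>M\<^esub> act h y) \<otimes>\<^bsub>M\<^esub> (inv\<^bsub>M\<^esub> x \<otimes>\<^bsub>M\<^esub> inv\<^bsub>M\<^esub> y)"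
    by (rule swap4) (use assms in auto)
  then show ?thesis using assms by (simp add: M.inv_mult)
qed

lemma img_inv: assumes "h \<in> carrier G" "x \<in> carrier M"
  shows "inv\<^bsub>M\<^esub> (act h x \<otimes>\<^bsub>M\<^esub> inv\<^bsub>M\<^esub> x) = act h (inv\<^bsub>M\<^esub> x) \<otimes>\<^bsub>M\<^esub> inv\<^bsub>M\<^esub> (inv\<^bsub>M\<^esub> x)"
  using assms by (simp add: M.inv_mult M.m_comm)

lemma Pw_one: "h \<in> carrier G \<Longrightarrow> Pw G M act h \<one>\<^bsub>M\<^esub> n = \<one>\<^bsub>M\<^esub>"
  by (induction n) auto

lemma Pw_inv: assumes "h \<in> carrier G" "a \<in> carrier M"
  shows "Pw G M act h (inv\<^bsub>M\<^esub> a) n = inv\<^bsub>M\<^esub> (Pw G M act h a n)"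
proof -
  have "Pw G M act h (inv\<^bsub>M\<^esub> a) n \<otimes>\<^bsub>M\<^esub> Pw G M act h a n = \<one>\<^bsub>M\<^esub>"
    using Pw_mult[OF assms(1) M.inv_closed[OF assms(2)] assms(2), of n] assms Pw_one by simp
  then show ?thesis using assms by (intro M.inv_equality[symmetric]) auto
qed

lemma coset_eq_B: assumes H: "subgroup H G" and f: "f \<in> Z1 G M act H"
  shows "(B1 G M act H #>\<^bsub>Z1_group G M act H\<^esub> f = B1 G M act H) \<longleftrightarrow> f \<in> B1 G M act H"
proof -
  interpret Z: comm_group "Z1_group G M act H" by (rule Z1_comm_group[OF H])
  show ?thesis using Z.coset_join2[OF _ B1_subgroup[OF H]] Z.rcos_self[OF _ B1_subgroup[OF H]] f by auto
qed

end

context bicyc begin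

abbreviation ZG where "ZG \<equiv> Z1_group G M act (carrier G)"
abbreviation BG where "BG \<equiv> B1 G M act (carrier G)"

definition fa :: "'m \<Rightarrow> 'g \<Rightarrow> 'm" where
  "fa a = (\<lambda>g\<in>carrier G. Pw G M act \<sigma> a (e g))"

definition Phi :: "'m \<Rightarrow> ('g \<Rightarrow> 'm) set" where
  "Phi a = r_coset ZG BG (fa a)"

definition S where "S = {x \<in> invariants (generate G {\<tau>}) M act. norm_map G M act \<sigma> x = \<one>\<^bsub>M\<^esub>}
                \<inter> minus_one_image M act \<sigma> (carrier M)
                \<inter> minus_one_image M act (\<sigma> \<otimes>\<^bsub>G\<^esub> \<tau>) (carrier M)"
definition T where "T = minus_one_image M act \<sigma> (invariants (generate G {\<tau>}) M act)"

lemma norm_eq: "a \<in> carrier M \<Longrightarrow> norm_map G M act \<sigma> a = Pw G M act \<sigma> a m"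
  unfolding norm_map_def using norm_Pw[OF sG] by simp

lemma S_iff: "a \<in> S \<longleftrightarrow> a \<in> carrier M \<and> act \<tau> a = a \<and> Pw G M act \<sigma> a m = \<one>\<^bsub>M\<^esub>
   \<and> (\<exists>x\<in>carrier M. a = act \<sigma> x \<otimes>\<^bsub>M\<^esub> inv\<^bsub>M\<^esub> x)
   \<and> (\<exists>z\<in>carrier M. a = act (\<sigma> \<otimes>\<^bsub>G\<^esub> \<tau>) z \<otimes>\<^bsub>M\<^esub> inv\<^bsub>M\<^esub> z)"
  unfolding S_def minus_one_image_def using inv_tau_I inv_tau_D norm_eq by auto

lemma T_iff: "a \<in> T \<longleftrightarrow> (\<exists>y\<in>carrier M. act \<tau> y = y \<and> a = act \<sigma> y \<otimes>\<^bsub>M\<^esub> inv\<^bsub>M\<^esub> y)"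
  unfolding T_def minus_one_image_def using inv_tau_I inv_tau_D by auto

lemma P_per: assumes a: "a \<in> carrier M" and N: "Pw G M act \<sigma> a m = \<one>\<^bsub>M\<^esub>"
  shows "Pw G M act \<sigma> a (r + m * q) = Pw G M act \<sigma> a r"
proof (induction q)
  case 0 then show ?case by simp
next
  case (Suc q)
  have "Pw G M act \<sigma> a (r + m * Suc q) = Pw G M act \<sigma> a ((r + m * q) + m)" by (simp add: algebra_simps)
  also have "\<dots> = Pw G M act \<sigma> a (r + m * q)" using Pw_add[OF sG a] N a sG by simp
  finally show ?case using Suc by simp
qed

lemma P_mod: assumes a: "a \<in> carrier M" and N: "Pw G M act \<sigma> a m = \<one>\<^bsub>M\<^esub>"
  shows "Pw G M act \<sigma> a n = Pw G M act \<sigma> a (n mod m)"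
  using P_per[OF a N, of "n mod m" "n div m"] by simp

lemma P_tau: assumes a: "a \<in> carrier M" and t: "act \<tau> a = a"
  shows "act \<tau> (Pw G M act \<sigma> a k) = Pw G M act \<sigma> a k"
  using Pw_fix[OF sG a tG comm t] .

lemma fa_Z1: assumes a: "a \<in> carrier M" and t: "act \<tau> a = a" and N: "Pw G M act \<sigma> a m = \<one>\<^bsub>M\<^esub>"
  shows "fa a \<in> Z1 G M act (carrier G)"
  unfolding fa_def
proof (rule Z1_I)
  fix g h assume g: "g \<in> carrier G" and h: "h \<in> carrier G"
  have "Pw G M act \<sigma> a (e (g \<otimes>\<^bsub>G\<^esub> h)) = Pw G M act \<sigma> a (e g + e h)"
    using e_mult[OF g h] P_mod[OF a N, of "e g + e h"] by simp
  also have "\<dots> = Pw G M act \<sigma> a (e g) \<otimes>\<^bsub>M\<^esub> act (\<sigma> [^]\<^bsub>G\<^esub> e g) (Pw G M act \<sigma> a (e h))"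
    by (rule Pw_add[OF sG a])
  also have "act (\<sigma> [^]\<^bsub>G\<^esub> e g) (Pw G M act \<sigma> a (e h)) = act g (Pw G M act \<sigma> a (e h))"
    using act_e[OF _ P_tau[OF a t] g] a sG by simp
  finally show "(\<lambda>g\<in>carrier G. Pw G M act \<sigma> a (e g)) (g \<otimes>\<^bsub>G\<^esub> h) =
       (\<lambda>g\<in>carrier G. Pw G M act \<sigma> a (e g)) g \<otimes>\<^bsub>M\<^esub> act g ((\<lambda>g\<in>carrier G. Pw G M act \<sigma> a (e g)) h)"
    using g h by simp
qed (use a sG in auto)

lemma S_good: "a \<in> S \<Longrightarrow> a \<in> carrier M \<and> act \<tau> a = a \<and> Pw G M act \<sigma> a m = \<one>\<^bsub>M\<^esub>"
  using S_iff by blast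

lemma fa_mult: assumes a: "a \<in> carrier M" and b: "b \<in> carrier M"
  shows "fa (a \<otimes>\<^bsub>M\<^esub> b) = fa a \<otimes>\<^bsub>ZG\<^esub> fa b"
  unfolding fa_def Z1_mult using Pw_mult[OF sG a b]
  by (intro restrict_ext) simp

lemma S_subgroup: "subgroup S M"
proof (rule M.subgroupI)
  show "S \<subseteq> carrier M" using S_iff by blast
  have "\<one>\<^bsub>M\<^esub> \<in> S" unfolding S_iff using Pw_one[OF sG] sG tG
    by (auto intro!: bexI[of _ "\<one>\<^bsub>M\<^esub>"])
  then show "S \<noteq> {}" by blast
next
  fix a assume "a \<in> S"
  then obtain x z where a: "a \<in> carrier M" "act \<tau> a = a" "Pw G M act \<sigma> a m = \<one>\<^bsub>M\<^esub>"
    and x: "x \<in> carrier M" "a = act \<sigma> x \<otimes>\<^bsub>M\<^esub> inv\<^bsub>M\<^esub> x"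
    and z: "z \<in> carrier M" "a = act (\<sigma> \<otimes>\<^bsub>G\<^esub> \<tau>) z \<otimes>\<^bsub>M\<^esub> inv\<^bsub>M\<^esub> z" unfolding S_iff by blast
  show "inv\<^bsub>M\<^esub> a \<in> S" unfolding S_iff
  proof (intro conjI bexI)
    show "inv\<^bsub>M\<^esub> a = act \<sigma> (inv\<^bsub>M\<^esub> x) \<otimes>\<^bsub>M\<^esub> inv\<^bsub>M\<^esub> (inv\<^bsub>M\<^esub> x)"
      using x img_inv[OF sG] by simp
    show "inv\<^bsub>M\<^esub> a = act (\<sigma> \<otimes>\<^bsub>G\<^esub> \<tau>) (inv\<^bsub>M\<^esub> z) \<otimes>\<^bsub>M\<^esub> inv\<^bsub>M\<^esub> (inv\<^bsub>M\<^esub> z)"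
      using z img_inv[OF stG] by simp
    show "Pw G M act \<sigma> (inv\<^bsub>M\<^esub> a) m = \<one>\<^bsub>M\<^esub>" using Pw_inv[OF sG a(1)] a by simp
  qed (use a x z tG in auto)
next
  fix a b assume "a \<in> S" "b \<in> S"
  then obtain x z x' z' where a: "a \<in> carrier M" "act \<tau> a = a" "Pw G M act \<sigma> a m = \<one>\<^bsub>M\<^esub>"
    and x: "x \<in> carrier M" "a = act \<sigma> x \<otimes>\<^bsub>M\<^esub> inv\<^bsub>M\<^esub> x"
    and z: "z \<in> carrier M" "a = act (\<sigma> \<otimes>\<^bsub>G\<^esub> \<tau>) z \<otimes>\<^bsub>M\<^esub> inv\<^bsub>M\<^esub> z"
    and b: "b \<in> carrier M" "act \<tau> b = b" "Pw G M act \<sigma> b m = \<one>\<^bsub>M\<^esub>"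
    and x': "x' \<in> carrier M" "b = act \<sigma> x' \<otimes>\<^bsub>M\<^esub> inv\<^bsub>M\<^esub> x'"
    and z': "z' \<in> carrier M" "b = act (\<sigma> \<otimes>\<^bsub>G\<^esub> \<tau>) z' \<otimes>\<^bsub>M\<^esub> inv\<^bsub>M\<^esub> z'" unfolding S_iff by blast
  show "a \<otimes>\<^bsub>M\<^esub> b \<in> S" unfolding S_iff
  proof (intro conjI bexI)
    show "a \<otimes>\<^bsub>M\<^esub> b = act \<sigma> (x \<otimes>\<^bsub>M\<^esub> x') \<otimes>\<^bsub>M\<^esub> inv\<^bsub>M\<^esub> (x \<otimes>\<^bsub>M\<^esub> x')"
      using x x' img_mult[OF sG] by simp
    show "a \<otimes>\<^bsub>M\<^esub> b = act (\<sigma> \<otimes>\<^bsub>G\<^esub> \<tau>) (z \<otimes>\<^bsub>M\<^esub> z') \<otimes>\<^bsub>M\<^esub> inv\<^bsub>M\<^esub> (z \<otimes>\<^bsub>M\<^esub> z')"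
      using z z' img_mult[OF stG] by simp
    show "Pw G M act \<sigma> (a \<otimes>\<^bsub>M\<^esub> b) m = \<one>\<^bsub>M\<^esub>" using Pw_mult[OF sG a(1) b(1)] a b by simp
  qed (use a b x z x' z' tG in auto)
qed

lemma ZG_cg: "comm_group ZG" by (rule Z1_comm_group[OF G.subgroup_self])

lemma BG_normal: "BG \<lhd> ZG"
  using comm_group.normal_iff_subgroup[OF ZG_cg] B1_subgroup[OF G.subgroup_self] by blast

lemma Phi_hom: "Phi \<in> hom (M\<lparr>carrier := S\<rparr>) (H1 G M act (carrier G))"
proof (rule homI)
  fix a assume "a \<in> carrier (M\<lparr>carrier := S\<rparr>)"
  then have "a \<in> S" by simp
  then have "fa a \<in> carrier ZG" using fa_Z1 S_good by simp
  then show "Phi a \<in> carrier (H1 G M act (carrier G))"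
    unfolding H1_carrier Phi_def RCOSETS_def by blast
next
  fix a b assume "a \<in> carrier (M\<lparr>carrier := S\<rparr>)" "b \<in> carrier (M\<lparr>carrier := S\<rparr>)"
  then have a: "a \<in> S" and b: "b \<in> S" by auto
  have fa: "fa a \<in> carrier ZG" "fa b \<in> carrier ZG" using fa_Z1 S_good a b by auto
  show "Phi (a \<otimes>\<^bsub>M\<lparr>carrier := S\<rparr>\<^esub> b) = Phi a \<otimes>\<^bsub>H1 G M act (carrier G)\<^esub> Phi b"
    unfolding H1_mult Phi_def using normal.rcos_sum[OF BG_normal fa] fa_mult S_good a b by simp
qed

lemma fa_at_sigma: assumes "a \<in> carrier M" "Pw G M act \<sigma> a m = \<one>\<^bsub>M\<^esub>"
  shows "fa a \<sigma> = a"
proof -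
  have "e \<sigma> = 1 mod m" using e_sig[of 1] sG by simp
  then have "fa a \<sigma> = Pw G M act \<sigma> a 1" unfolding fa_def using sG P_mod[OF assms, of 1] by simp
  then show ?thesis using assms sG by simp
qed

lemma fa_at_tau: "fa a \<tau> = \<one>\<^bsub>M\<^esub>"
proof -
  have "e \<tau> = 0" using e_tau[of 1] tG by simp
  then show ?thesis unfolding fa_def using tG by simp
qed

lemma T_sub_S: "T \<subseteq> S"
proof
  fix a assume "a \<in> T"
  then obtain y where y: "y \<in> carrier M" "act \<tau> y = y" and a: "a = act \<sigma> y \<otimes>\<^bsub>M\<^esub> inv\<^bsub>M\<^esub> y"
    unfolding T_iff by blast
  have st: "act (\<sigma> \<otimes>\<^bsub>G\<^esub> \<tau>) y = act \<sigma> y" using act_comp sG tG y by simp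
  have "act \<tau> (act \<sigma> y) = act \<sigma> y" using act_comp[OF tG sG y(1)] act_comp[OF sG tG y(1)] comm y by simp
  then have "act \<tau> a = a" using a y tG sG by simp
  moreover have "Pw G M act \<sigma> a m = \<one>\<^bsub>M\<^esub>" using a Pw_cob[OF sG y(1), of m] y sG by simp
  moreover have "\<exists>x\<in>carrier M. a = act \<sigma> x \<otimes>\<^bsub>M\<^esub> inv\<^bsub>M\<^esub> x" using a y by blast
  moreover have "\<exists>z\<in>carrier M. a = act (\<sigma> \<otimes>\<^bsub>G\<^esub> \<tau>) z \<otimes>\<^bsub>M\<^esub> inv\<^bsub>M\<^esub> z"
    using a y(1) by (intro bexI[of _ y]) (simp_all add: st)
  ultimately show "a \<in> S" unfolding S_iff using a y sG by auto
qed

lemma Phi_ker: assumes a: "a \<in> S" shows "Phi a = BG \<longleftrightarrow> a \<in> T"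
proof -
  have g: "a \<in> carrier M" "act \<tau> a = a" "Pw G M act \<sigma> a m = \<one>\<^bsub>M\<^esub>" using S_good[OF a] by auto
  have Z: "fa a \<in> Z1 G M act (carrier G)" using fa_Z1 g by simp
  have "Phi a = BG \<longleftrightarrow> fa a \<in> BG" unfolding Phi_def using coset_eq_B[OF G.subgroup_self Z] .
  also have "\<dots> \<longleftrightarrow> a \<in> T"
  proof
    assume "fa a \<in> BG"
    then obtain x where x: "x \<in> carrier M" and fx: "fa a = cob (carrier G) x" unfolding B1_eq by blast
    have "act \<tau> x \<otimes>\<^bsub>M\<^esub> inv\<^bsub>M\<^esub> x = \<one>\<^bsub>M\<^esub>" using fun_cong[OF fx, of \<tau>] fa_at_tau tG
      by (simp add: cob_def)
    then have tx: "act \<tau> x = x" using div_one x tG by simp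
    have "a = act \<sigma> x \<otimes>\<^bsub>M\<^esub> inv\<^bsub>M\<^esub> x" using fun_cong[OF fx, of \<sigma>] fa_at_sigma[OF g(1,3)] sG
      by (simp add: cob_def)
    then show "a \<in> T" unfolding T_iff using x tx by blast
  next
    assume "a \<in> T"
    then obtain y where y: "y \<in> carrier M" "act \<tau> y = y" and ay: "a = act \<sigma> y \<otimes>\<^bsub>M\<^esub> inv\<^bsub>M\<^esub> y"
      unfolding T_iff by blast
    have "fa a = cob (carrier G) y" unfolding fa_def cob_def
    proof (rule restrict_ext)
      fix g assume g: "g \<in> carrier G"
      show "Pw G M act \<sigma> a (e g) = act g y \<otimes>\<^bsub>M\<^esub> inv\<^bsub>M\<^esub> y"
        using ay Pw_cob[OF sG y(1)] act_e[OF y g] by simp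
    qed
    then show "fa a \<in> BG" unfolding B1_eq using y by blast
  qed
  finally show ?thesis .
qed

end


context gmod begin

lemma restrict_Z1: assumes H: "subgroup H G" and f: "f \<in> Z1 G M act (carrier G)"
  shows "restrict f H \<in> Z1 G M act H"
proof -
  have HG: "\<And>g. g \<in> H \<Longrightarrow> g \<in> carrier G" by (rule subgroup.mem_carrier[OF H])
  have Hm: "\<And>g h. g \<in> H \<Longrightarrow> h \<in> H \<Longrightarrow> g \<otimes>\<^bsub>G\<^esub> h \<in> H" by (rule subgroup.m_closed[OF H])
  show ?thesis by (rule Z1_I) (use Z1_D[OF f] HG Hm in auto)
qed

lemma swap3: assumes "p \<in> carrier M" "q \<in> carrier M" "r \<in> carrier M"
  shows "(p \<otimes>\<^bsub>M\<^esub> q) \<otimes>\<^bsub>M\<^esub> r = (p \<otimes>\<^bsub>M\<^esub> r) \<otimes>\<^bsub>M\<^esub> q"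
  using assms by (simp add: M.m_ac)

lemma res_coset: assumes H: "subgroup H G" and f: "f \<in> Z1 G M act (carrier G)"
  shows "res G M act H (r_coset (Z1_group G M act (carrier G)) (B1 G M act (carrier G)) f)
       = r_coset (Z1_group G M act H) (B1 G M act H) (restrict f H)"
proof -
  have HG: "\<And>g. g \<in> H \<Longrightarrow> g \<in> carrier G" by (rule subgroup.mem_carrier[OF H])
  note D = Z1_D[OF f]
  show ?thesis
  proof (intro equalityI subsetI)
    fix F assume "F \<in> res G M act H (r_coset (Z1_group G M act (carrier G)) (B1 G M act (carrier G)) f)"
    then obtain k b where k: "k \<in> (\<lambda>f. restrict f H) ` r_coset (Z1_group G M act (carrier G)) (B1 G M act (carrier G)) f"
      and b: "b \<in> B1 G M act H" and Fkb: "F = k \<otimes>\<^bsub>Z1_group G M act H\<^esub> b"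
      unfolding res_def set_mult_def by blast
    obtain c where c: "c \<in> r_coset (Z1_group G M act (carrier G)) (B1 G M act (carrier G)) f" and kc: "k = restrict c H"
      using k by blast
    obtain b0 where b0: "b0 \<in> B1 G M act (carrier G)" and cb: "c = b0 \<otimes>\<^bsub>Z1_group G M act (carrier G)\<^esub> f"
      using c unfolding r_coset_def by blast
    obtain x where x: "x \<in> carrier M" and bx: "b0 = cob (carrier G) x" using b0 unfolding B1_eq by blast
    obtain y where y: "y \<in> carrier M" and by': "b = cob H y" using b unfolding B1_eq by blast
    have F: "F = (\<lambda>g\<in>H. (restrict (\<lambda>g\<in>carrier G. cob (carrier G) x g \<otimes>\<^bsub>M\<^esub> f g) H) g \<otimes>\<^bsub>M\<^esub> cob H y g)"
      using Fkb kc cb bx by' by simp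
    have "F = (\<lambda>g\<in>H. cob H (x \<otimes>\<^bsub>M\<^esub> y) g \<otimes>\<^bsub>M\<^esub> restrict f H g)"
      unfolding F
    proof (rule restrict_ext)
      fix g assume g: "g \<in> H"
      have "(act g x \<otimes>\<^bsub>M\<^esub> inv\<^bsub>M\<^esub> x \<otimes>\<^bsub>M\<^esub> f g) \<otimes>\<^bsub>M\<^esub> (act g y \<otimes>\<^bsub>M\<^esub> inv\<^bsub>M\<^esub> y)
          = (act g x \<otimes>\<^bsub>M\<^esub> inv\<^bsub>M\<^esub> x \<otimes>\<^bsub>M\<^esub> (act g y \<otimes>\<^bsub>M\<^esub> inv\<^bsub>M\<^esub> y)) \<otimes>\<^bsub>M\<^esub> f g"
        by (rule swap3) (use g HG x y D in auto)
      also have "\<dots> = (act g (x \<otimes>\<^bsub>M\<^esub> y) \<otimes>\<^bsub>M\<^esub> inv\<^bsub>M\<^esub> (x \<otimes>\<^bsub>M\<^esub> y)) \<otimes>\<^bsub>M\<^esub> f g"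
        using img_mult[OF HG[OF g] x y] by simp
      finally show "restrict (\<lambda>g\<in>carrier G. cob (carrier G) x g \<otimes>\<^bsub>M\<^esub> f g) H g \<otimes>\<^bsub>M\<^esub> cob H y g =
         cob H (x \<otimes>\<^bsub>M\<^esub> y) g \<otimes>\<^bsub>M\<^esub> restrict f H g"
        using g HG by (simp add: cob_def)
    qed
    moreover have "cob H (x \<otimes>\<^bsub>M\<^esub> y) \<in> B1 G M act H" unfolding B1_eq using x y by blast
    ultimately show "F \<in> r_coset (Z1_group G M act H) (B1 G M act H) (restrict f H)"
      unfolding r_coset_def Z1_mult by blast
  next
    fix F assume "F \<in> r_coset (Z1_group G M act H) (B1 G M act H) (restrict f H)"
    then obtain b where b: "b \<in> B1 G M act H" and Fb: "F = b \<otimes>\<^bsub>Z1_group G M act H\<^esub> restrict f H"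
      unfolding r_coset_def by blast
    obtain y where y: "y \<in> carrier M" and by': "b = cob H y" using b unfolding B1_eq by blast
    have F: "F = (\<lambda>g\<in>H. cob H y g \<otimes>\<^bsub>M\<^esub> restrict f H g)" using Fb by' by simp
    have "F = (\<lambda>g\<in>H. (restrict (\<lambda>g\<in>carrier G. cob (carrier G) \<one>\<^bsub>M\<^esub> g \<otimes>\<^bsub>M\<^esub> f g) H) g \<otimes>\<^bsub>M\<^esub> cob H y g)"
      unfolding F
    proof (rule restrict_ext)
      fix g assume g: "g \<in> H"
      show "cob H y g \<otimes>\<^bsub>M\<^esub> restrict f H g =
         restrict (\<lambda>g\<in>carrier G. cob (carrier G) \<one>\<^bsub>M\<^esub> g \<otimes>\<^bsub>M\<^esub> f g) H g \<otimes>\<^bsub>M\<^esub> cob H y g"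
        using g HG y D by (simp add: cob_def M.m_comm)
    qed
    moreover have "cob (carrier G) \<one>\<^bsub>M\<^esub> \<in> B1 G M act (carrier G)" unfolding B1_eq by blast
    then have "(\<lambda>g\<in>carrier G. cob (carrier G) \<one>\<^bsub>M\<^esub> g \<otimes>\<^bsub>M\<^esub> f g) \<in> r_coset (Z1_group G M act (carrier G)) (B1 G M act (carrier G)) f"
      unfolding r_coset_def Z1_mult by blast
    then have "restrict (\<lambda>g\<in>carrier G. cob (carrier G) \<one>\<^bsub>M\<^esub> g \<otimes>\<^bsub>M\<^esub> f g) H \<in>
        (\<lambda>f. restrict f H) ` r_coset (Z1_group G M act (carrier G)) (B1 G M act (carrier G)) f"
      by (rule imageI)
    moreover have "cob H y \<in> B1 G M act H" unfolding B1_eq using y by blast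
    ultimately show "F \<in> res G M act H (r_coset (Z1_group G M act (carrier G)) (B1 G M act (carrier G)) f)"
      unfolding res_def set_mult_def Z1_mult by blast
  qed
qed

lemma res_one_iff: assumes H: "subgroup H G" and f: "f \<in> Z1 G M act (carrier G)"
  shows "res G M act H (r_coset (Z1_group G M act (carrier G)) (B1 G M act (carrier G)) f) = B1 G M act H
     \<longleftrightarrow> restrict f H \<in> B1 G M act H"
  using res_coset[OF H f] coset_eq_B[OF H restrict_Z1[OF H f]] by simp

end

context bicyc begin

abbreviation Hs where "Hs \<equiv> generate G {\<sigma>}"
abbreviation Ht where "Ht \<equiv> generate G {\<tau>}"
abbreviation Hst where "Hst \<equiv> generate G {\<sigma> \<otimes>\<^bsub>G\<^esub> \<tau>}"

lemma Pw_st: assumes a: "a \<in> carrier M" and t: "act \<tau> a = a"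
  shows "Pw G M act \<sigma> a k = Pw G M act (\<sigma> \<otimes>\<^bsub>G\<^esub> \<tau>) a k"
proof (induction k)
  case 0 then show ?case by simp
next
  case (Suc k)
  have "act ((\<sigma> \<otimes>\<^bsub>G\<^esub> \<tau>) [^]\<^bsub>G\<^esub> k) a = act (\<sigma> [^]\<^bsub>G\<^esub> k \<otimes>\<^bsub>G\<^esub> \<tau> [^]\<^bsub>G\<^esub> k) a"
    using G.pow_mult_distrib[OF comm sG tG] by simp
  also have "\<dots> = act (\<sigma> [^]\<^bsub>G\<^esub> k) a" using act_comp sG tG a fix_pow[OF tG a t] by simp
  finally show ?case using Suc by simp
qed

lemma restr_sig: assumes a: "a \<in> S"
  shows "restrict (fa a) (generate G {\<sigma>}) \<in> B1 G M act (generate G {\<sigma>})"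
proof -
  obtain x where x: "x \<in> carrier M" "a = act \<sigma> x \<otimes>\<^bsub>M\<^esub> inv\<^bsub>M\<^esub> x" using a S_iff by blast
  have g: "a \<in> carrier M" "Pw G M act \<sigma> a m = \<one>\<^bsub>M\<^esub>" using S_good[OF a] by auto
  have "restrict (fa a) (generate G {\<sigma>}) = cob (generate G {\<sigma>}) x"
    unfolding cob_def
  proof (rule restrict_ext)
    fix g assume "g \<in> generate G {\<sigma>}"
    then obtain k where k: "g = \<sigma> [^]\<^bsub>G\<^esub> (k::nat)" using gen_mem[OF sG] by blast
    have "fa a g = Pw G M act \<sigma> a k" unfolding fa_def using k e_sig sG P_mod[OF g] by simp
    then show "fa a g = act g x \<otimes>\<^bsub>M\<^esub> inv\<^bsub>M\<^esub> x" using Pw_cob[OF sG x(1)] x k by simp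
  qed
  then show ?thesis unfolding B1_eq using x by blast
qed

lemma restr_tau: "restrict (fa a) (generate G {\<tau>}) \<in> B1 G M act (generate G {\<tau>})"
proof -
  have "restrict (fa a) (generate G {\<tau>}) = cob (generate G {\<tau>}) \<one>\<^bsub>M\<^esub>"
    unfolding cob_def
  proof (rule restrict_ext)
    fix g assume "g \<in> generate G {\<tau>}"
    then obtain k where k: "g = \<tau> [^]\<^bsub>G\<^esub> (k::nat)" using gen_mem[OF tG] by blast
    show "fa a g = act g \<one>\<^bsub>M\<^esub> \<otimes>\<^bsub>M\<^esub> inv\<^bsub>M\<^esub> \<one>\<^bsub>M\<^esub>" unfolding fa_def using k e_tau tG by simp
  qed
  then show ?thesis unfolding B1_eq by blast
qed

lemma restr_st: assumes a: "a \<in> S"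
  shows "restrict (fa a) (generate G {\<sigma> \<otimes>\<^bsub>G\<^esub> \<tau>}) \<in> B1 G M act (generate G {\<sigma> \<otimes>\<^bsub>G\<^esub> \<tau>})"
proof -
  obtain z where z: "z \<in> carrier M" "a = act (\<sigma> \<otimes>\<^bsub>G\<^esub> \<tau>) z \<otimes>\<^bsub>M\<^esub> inv\<^bsub>M\<^esub> z" using a S_iff by blast
  have g: "a \<in> carrier M" "act \<tau> a = a" "Pw G M act \<sigma> a m = \<one>\<^bsub>M\<^esub>" using S_good[OF a] by auto
  have "restrict (fa a) (generate G {\<sigma> \<otimes>\<^bsub>G\<^esub> \<tau>}) = cob (generate G {\<sigma> \<otimes>\<^bsub>G\<^esub> \<tau>}) z"
    unfolding cob_def
  proof (rule restrict_ext)
    fix g assume "g \<in> generate G {\<sigma> \<otimes>\<^bsub>G\<^esub> \<tau>}"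
    then obtain k where k: "g = (\<sigma> \<otimes>\<^bsub>G\<^esub> \<tau>) [^]\<^bsub>G\<^esub> (k::nat)" using gen_mem[OF stG] by blast
    have "fa a g = Pw G M act \<sigma> a k" unfolding fa_def using k e_st stG P_mod[OF g(1,3)] by simp
    also have "\<dots> = Pw G M act (\<sigma> \<otimes>\<^bsub>G\<^esub> \<tau>) a k" by (rule Pw_st[OF g(1,2)])
    finally show "fa a g = act g z \<otimes>\<^bsub>M\<^esub> inv\<^bsub>M\<^esub> z" using Pw_cob[OF stG z(1)] z k by simp
  qed
  then show ?thesis unfolding B1_eq using z by blast
qed

definition Kset where "Kset = kernel (H1 G M act (carrier G))
              (H1 G M act Hs \<times>\<times> H1 G M act Ht \<times>\<times> H1 G M act Hst)
              (\<lambda>C. (res G M act Hs C, res G M act Ht C, res G M act Hst C))"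

lemma Kset_iff: "C \<in> Kset \<longleftrightarrow> C \<in> carrier (H1 G M act (carrier G)) \<and>
   res G M act Hs C = B1 G M act Hs \<and> res G M act Ht C = B1 G M act Ht \<and> res G M act Hst C = B1 G M act Hst"
  unfolding Kset_def kernel_def by (simp add: H1_one)

lemma Phi_in_K: assumes a: "a \<in> S" shows "Phi a \<in> Kset"
proof -
  have Z: "fa a \<in> Z1 G M act (carrier G)" using fa_Z1 S_good[OF a] by simp
  have "Phi a \<in> carrier (H1 G M act (carrier G))" using Phi_hom a by (auto simp: hom_def)
  then show ?thesis unfolding Kset_iff Phi_def
    using res_one_iff[OF gen_sub[OF sG] Z] res_one_iff[OF gen_sub[OF tG] Z] res_one_iff[OF gen_sub[OF stG] Z]
      restr_sig[OF a] restr_tau restr_st[OF a] by simp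
qed

end


context bicyc begin

lemma cob_restr: assumes H: "subgroup H G" and f: "f \<in> Z1 G M act (carrier G)"
  and r: "restrict f H \<in> B1 G M act H"
  shows "\<exists>x\<in>carrier M. \<forall>g\<in>H. f g = act g x \<otimes>\<^bsub>M\<^esub> inv\<^bsub>M\<^esub> x"
proof -
  obtain x where x: "x \<in> carrier M" and fx: "restrict f H = cob H x" using r unfolding B1_eq by blast
  have "\<forall>g\<in>H. f g = act g x \<otimes>\<^bsub>M\<^esub> inv\<^bsub>M\<^esub> x"
  proof
    fix g assume g: "g \<in> H"
    show "f g = act g x \<otimes>\<^bsub>M\<^esub> inv\<^bsub>M\<^esub> x" using fun_cong[OF fx, of g] g by (simp add: cob_def)
  qed
  then show ?thesis using x by blast
qed

lemma K_sub: assumes C: "C \<in> Kset" shows "C \<in> Phi ` S"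
proof -
  have Ccar: "C \<in> RCOSETS ZG BG" and rs: "res G M act Hs C = B1 G M act Hs"
    and rt: "res G M act Ht C = B1 G M act Ht" and rst: "res G M act Hst C = B1 G M act Hst"
    using C unfolding Kset_iff H1_carrier by auto
  obtain f where f: "f \<in> Z1 G M act (carrier G)" and Cf: "C = r_coset ZG BG f"
    using Ccar unfolding RCOSETS_def by auto
  obtain x where x: "x \<in> carrier M" and fx: "\<forall>g\<in>Hs. f g = act g x \<otimes>\<^bsub>M\<^esub> inv\<^bsub>M\<^esub> x"
    using cob_restr[OF gen_sub[OF sG] f] rs res_one_iff[OF gen_sub[OF sG] f] Cf by auto
  obtain y where y: "y \<in> carrier M" and fy: "\<forall>g\<in>Ht. f g = act g y \<otimes>\<^bsub>M\<^esub> inv\<^bsub>M\<^esub> y"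
    using cob_restr[OF gen_sub[OF tG] f] rt res_one_iff[OF gen_sub[OF tG] f] Cf by auto
  obtain z where z: "z \<in> carrier M" and fz: "\<forall>g\<in>Hst. f g = act g z \<otimes>\<^bsub>M\<^esub> inv\<^bsub>M\<^esub> z"
    using cob_restr[OF gen_sub[OF stG] f] rst res_one_iff[OF gen_sub[OF stG] f] Cf by auto
  interpret Z: comm_group ZG by (rule ZG_cg)
  define w where "w = inv\<^bsub>M\<^esub> y"
  have w: "w \<in> carrier M" using y by (simp add: w_def)
  define c where "c = cob (carrier G) w"
  have c: "c \<in> BG" "c \<in> Z1 G M act (carrier G)" using w cob_Z1[OF G.subgroup_self w]
    unfolding c_def B1_eq by auto
  define f' where "f' = c \<otimes>\<^bsub>ZG\<^esub> f"
  have f': "f' \<in> Z1 G M act (carrier G)" unfolding f'_def using c f Z.m_closed by simp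
  note D = Z1_D[OF f] and D' = Z1_D[OF f']
  have f'v: "f' g = (act g w \<otimes>\<^bsub>M\<^esub> inv\<^bsub>M\<^esub> w) \<otimes>\<^bsub>M\<^esub> f g" if "g \<in> carrier G" for g
    using that unfolding f'_def c_def by (simp add: cob_def)
  have coset: "r_coset ZG BG f' = C"
  proof -
    have sub: "BG \<subseteq> carrier ZG" by (rule subgroup.subset[OF B1_subgroup[OF G.subgroup_self]])
    have "r_coset ZG (r_coset ZG BG c) f = r_coset ZG BG (c \<otimes>\<^bsub>ZG\<^esub> f)"
      by (rule Z.coset_mult_assoc[OF sub]) (use c f in auto)
    then have "r_coset ZG BG f' = r_coset ZG (r_coset ZG BG c) f" unfolding f'_def by simp
    also have "r_coset ZG BG c = BG" using coset_eq_B[OF G.subgroup_self c(2)] c by simp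
    finally show ?thesis using Cf by simp
  qed
  have sub: "f' g = act g (w \<otimes>\<^bsub>M\<^esub> u) \<otimes>\<^bsub>M\<^esub> inv\<^bsub>M\<^esub> (w \<otimes>\<^bsub>M\<^esub> u)"
    if "g \<in> carrier G" "u \<in> carrier M" "f g = act g u \<otimes>\<^bsub>M\<^esub> inv\<^bsub>M\<^esub> u" for g u
    using f'v[OF that(1)] that img_mult[OF that(1) w that(2)] by simp
  have sig_in: "\<sigma> \<in> Hs" and tau_in: "\<tau> \<in> Ht" and st_in: "\<sigma> \<otimes>\<^bsub>G\<^esub> \<tau> \<in> Hst"
    by (auto intro: generate.incl)
  have ft: "f' \<tau> = \<one>\<^bsub>M\<^esub>"
    using sub[OF tG y] fy tau_in tG y unfolding w_def by simp
  define a where "a = f' \<sigma>"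
  have a: "a \<in> carrier M" unfolding a_def using D' sG by simp
  have ax: "a = act \<sigma> (w \<otimes>\<^bsub>M\<^esub> x) \<otimes>\<^bsub>M\<^esub> inv\<^bsub>M\<^esub> (w \<otimes>\<^bsub>M\<^esub> x)"
    unfolding a_def using sub[OF sG x] fx sig_in by simp
  have f'st: "f' (\<sigma> \<otimes>\<^bsub>G\<^esub> \<tau>) = a" unfolding a_def using D'(3)[OF sG tG] D'(1)[OF sG] ft sG by simp
  have az: "a = act (\<sigma> \<otimes>\<^bsub>G\<^esub> \<tau>) (w \<otimes>\<^bsub>M\<^esub> z) \<otimes>\<^bsub>M\<^esub> inv\<^bsub>M\<^esub> (w \<otimes>\<^bsub>M\<^esub> z)"
    using f'st sub[OF stG z] fz st_in by simp
  have at: "act \<tau> a = a"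
  proof -
    have "f' (\<tau> \<otimes>\<^bsub>G\<^esub> \<sigma>) = act \<tau> a" unfolding a_def using D'(3)[OF tG sG] ft tG sG D' by simp
    then show ?thesis using f'st comm by simp
  qed
  have f'sig: "f' (\<sigma> [^]\<^bsub>G\<^esub> n) = Pw G M act \<sigma> a n" for n
  proof (induction n)
    case 0
    have "f' \<one>\<^bsub>G\<^esub> = f' \<one>\<^bsub>G\<^esub> \<otimes>\<^bsub>M\<^esub> f' \<one>\<^bsub>G\<^esub>" using D'(3)[of "\<one>\<^bsub>G\<^esub>" "\<one>\<^bsub>G\<^esub>"] D' by simp
    then have "f' \<one>\<^bsub>G\<^esub> = \<one>\<^bsub>M\<^esub>" using D'(1)[of "\<one>\<^bsub>G\<^esub>"]
      by (metis G.one_closed M.l_one M.one_closed M.r_cancel)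
    then show ?case by simp
  next
    case (Suc n)
    have "f' (\<sigma> [^]\<^bsub>G\<^esub> Suc n) = f' (\<sigma> [^]\<^bsub>G\<^esub> n \<otimes>\<^bsub>G\<^esub> \<sigma>)" by simp
    also have "\<dots> = f' (\<sigma> [^]\<^bsub>G\<^esub> n) \<otimes>\<^bsub>M\<^esub> act (\<sigma> [^]\<^bsub>G\<^esub> n) (f' \<sigma>)" using D'(3) sG by simp
    finally show ?case using Suc a_def by simp
  qed
  have f'tau: "f' (\<tau> [^]\<^bsub>G\<^esub> n) = \<one>\<^bsub>M\<^esub>" for n :: nat
  proof (induction n)
    case 0
    show ?case using f'sig[of 0] by simp
  next
    case (Suc n)
    have "f' (\<tau> [^]\<^bsub>G\<^esub> Suc n) = f' (\<tau> [^]\<^bsub>G\<^esub> n \<otimes>\<^bsub>G\<^esub> \<tau>)" by simp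
    also have "\<dots> = f' (\<tau> [^]\<^bsub>G\<^esub> n) \<otimes>\<^bsub>M\<^esub> act (\<tau> [^]\<^bsub>G\<^esub> n) (f' \<tau>)" using D'(3) tG by simp
    finally show ?case using Suc ft tG by simp
  qed
  have N: "Pw G M act \<sigma> a m = \<one>\<^bsub>M\<^esub>" using f'sig[of m] f'sig[of 0] pow_m by simp
  have aS: "a \<in> S" unfolding S_iff using a at N ax az w x z by blast
  have "fa a = f'"
  proof (rule ext)
    fix g show "fa a g = f' g"
    proof (cases "g \<in> carrier G")
      case True
      obtain j where j: "g = \<sigma> [^]\<^bsub>G\<^esub> (e g) \<otimes>\<^bsub>G\<^esub> \<tau> [^]\<^bsub>G\<^esub> (j::nat)" using decomp_e[OF True] by blast
      have "f' g = f' (\<sigma> [^]\<^bsub>G\<^esub> (e g)) \<otimes>\<^bsub>M\<^esub> act (\<sigma> [^]\<^bsub>G\<^esub> (e g)) (f' (\<tau> [^]\<^bsub>G\<^esub> j))"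
        by (subst j) (use D'(3) sG tG in simp)
      then show ?thesis unfolding fa_def using True f'sig f'tau sG a by simp
    next
      case False then show ?thesis unfolding fa_def using D' by simp
    qed
  qed
  then have "Phi a = C" unfolding Phi_def using coset by simp
  then show ?thesis using aS by blast
qed

lemma K_eq: "Kset = Phi ` S" using K_sub Phi_in_K by blast

lemma main: "(H1 G M act (carrier G))\<lparr>carrier := Kset\<rparr> \<cong> (M\<lparr>carrier := S\<rparr> Mod T)"
proof -
  let ?MS = "M\<lparr>carrier := S\<rparr>" and ?H = "H1 G M act (carrier G)"
  have gMS: "group ?MS" by (rule subgroup.subgroup_is_group[OF S_subgroup M.is_group])
  have gH: "group ?H" by (rule H1_group[OF G.subgroup_self])
  have gh: "group_hom ?MS ?H Phi"
    using gMS gH Phi_hom by (simp add: group_hom_def group_hom_axioms_def)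
  have subK: "subgroup (Phi ` S) ?H" using group_hom.img_is_subgroup[OF gh] by simp
  let ?K = "?H\<lparr>carrier := Phi ` S\<rparr>"
  have gK: "group ?K" by (rule subgroup.subgroup_is_group[OF subK gH])
  have hK: "Phi \<in> hom ?MS ?K" using Phi_hom by (auto simp: hom_def)
  have ghK: "group_hom ?MS ?K Phi" using gMS gK hK by (simp add: group_hom_def group_hom_axioms_def)
  have ker: "kernel ?MS ?K Phi = T"
    unfolding kernel_def using Phi_ker T_sub_S by (auto simp: H1_one)
  have iso1: "(?MS Mod T) \<cong> ?K" using group_hom.FactGroup_iso[OF ghK] ker by simp
  have "T \<lhd> ?MS" using group_hom.normal_kernel[OF ghK] ker by simp
  then have gQ: "group (?MS Mod T)" by (rule normal.factorgroup_is_group)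
  have "?K \<cong> (?MS Mod T)" by (rule group.iso_sym[OF gQ iso1])
  then show ?thesis using K_eq by simp
qed

end

theorem mainTheorem17:
  fixes G :: "'g monoid" and M :: "'m monoid" and act :: "'g \<Rightarrow> 'm \<Rightarrow> 'm"
    and \<sigma> \<tau> :: 'g
  assumes "G_module G M act"
    and "finite (carrier G)"
    and "\<sigma> \<in> carrier G" and "\<tau> \<in> carrier G"
    and "\<sigma> \<otimes>\<^bsub>G\<^esub> \<tau> = \<tau> \<otimes>\<^bsub>G\<^esub> \<sigma>"
    and "set_mult G (generate G {\<sigma>}) (generate G {\<tau>}) = carrier G"
    and "generate G {\<sigma>} \<inter> generate G {\<tau>} = {\<one>\<^bsub>G\<^esub>}"
  shows "(H1 G M act (carrier G))
           \<lparr>carrier := kernel (H1 G M act (carrier G))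
              (H1 G M act (generate G {\<sigma>}) \<times>\<times> H1 G M act (generate G {\<tau>})
                 \<times>\<times> H1 G M act (generate G {\<sigma> \<otimes>\<^bsub>G\<^esub> \<tau>}))
              (\<lambda>C. (res G M act (generate G {\<sigma>}) C, res G M act (generate G {\<tau>}) C,
                     res G M act (generate G {\<sigma> \<otimes>\<^bsub>G\<^esub> \<tau>}) C))\<rparr>
         \<cong> (M\<lparr>carrier :=
                {x \<in> invariants (generate G {\<tau>}) M act. norm_map G M act \<sigma> x = \<one>\<^bsub>M\<^esub>}
                \<inter> minus_one_image M act \<sigma> (carrier M)
                \<inter> minus_one_image M act (\<sigma> \<otimes>\<^bsub>G\<^esub> \<tau>) (carrier M)\<rparr>
            Mod minus_one_image M act \<sigma> (invariants (generate G {\<tau>}) M act))"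
proof -
  interpret B: bicyc G M act \<sigma> \<tau>
    by (rule bicyc.intro, rule gmod.intro, rule assms(1), unfold_locales) (use assms in auto)
  show ?thesis using B.main unfolding B.Kset_def B.S_def B.T_def .
qed

end
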